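(* Assume $\|X\|/p\le\lambda\le4\|X\|\sqrt{\log p}$. For $p$ sufficiently large and any $\beta^*\in\mathbb R^p$ with support $S_*$ and $s_*=|S_*|$, almost surely \[ \int\Lambda_{n,\beta,\beta^*}(Y)\,d\Pi(\beta)\ge\frac{\pi_p(s_* )}{p^{2s_*}}e^{-\lambda\|\beta^*\|_1}e^{-1}. \]
   Context: $X$ is a deterministic real $n\times p$ matrix, $\|X\|=\max_i\|X_{\cdot,i}\|_2$ (max column norm), $Y\in\mathbb R^n$ the observation. $\Lambda_{n,\beta,\beta^*}(Y)=\exp\big(-\frac12\|X(\beta-\beta^* )\|_2^2+(Y-X\beta^* )^tX(\beta-\beta^* )\big)$. The prior $\Pi$ on $\mathbb R^p$: draw $s$ from a probability $\pi_p$ on $\{0,\dots,p\}$, then $S$ uniformly among subsets of size $s$, then $\beta_i$, $i\in S$, i.i.d. with Laplace density $x\mapsto\frac\lambda2e^{-\lambda|x|}$, and $\beta_i=0$ for $i\notin S$. *)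

theory Defs
  imports "HOL-Analysis.Analysis" "HOL-Probability.Probability"
begin

text \<open>Vectors in R^p are functions nat => real (only indices i < p matter);
  the n x p design matrix X is a function nat => nat => real, X k i for k < n, i < p.\<close>

definition col_norm_max :: "nat \<Rightarrow> nat \<Rightarrow> (nat \<Rightarrow> nat \<Rightarrow> real) \<Rightarrow> real" where
  "col_norm_max n p X = Max ((\<lambda>i. sqrt (\<Sum>k<n. (X k i)\<^sup>2)) ` {..<p})"

definition matvec :: "nat \<Rightarrow> (nat \<Rightarrow> nat \<Rightarrow> real) \<Rightarrow> (nat \<Rightarrow> real) \<Rightarrow> nat \<Rightarrow> real" where
  "matvec p X b k = (\<Sum>i<p. X k i * b i)"

definition Lambda :: "nat \<Rightarrow> nat \<Rightarrow> (nat \<Rightarrow> nat \<Rightarrow> real) \<Rightarrow> (nat \<Rightarrow> real) \<Rightarrow> (nat \<Rightarrow> real)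
    \<Rightarrow> (nat \<Rightarrow> real) \<Rightarrow> real" where
  "Lambda n p X beta betas Y =
     exp (- (1/2) * (\<Sum>k<n. (matvec p X (\<lambda>i. beta i - betas i) k)\<^sup>2)
          + (\<Sum>k<n. (Y k - matvec p X betas k) * matvec p X (\<lambda>i. beta i - betas i) k))"

definition laplace_density :: "real \<Rightarrow> real \<Rightarrow> real" where
  "laplace_density lam x = lam / 2 * exp (- lam * \<bar>x\<bar>)"

definition slab :: "nat set \<Rightarrow> real \<Rightarrow> (nat \<Rightarrow> real) measure" where
  "slab S lam = PiM S (\<lambda>_. density lborel (\<lambda>x. ennreal (laplace_density lam x)))"

definition extend_zero :: "nat set \<Rightarrow> (nat \<Rightarrow> real) \<Rightarrow> nat \<Rightarrow> real" where
  "extend_zero S b = (\<lambda>i. if i \<in> S then b i else 0)"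

text \<open>Integral of a nonnegative function f against the hierarchical prior Pi:
  s ~ pi_p on {0..p}, S uniform among subsets of {0..<p} of size s,
  beta_i (i in S) i.i.d. Laplace, beta_i = 0 otherwise.\<close>
definition prior_nn_integral :: "nat \<Rightarrow> (nat \<Rightarrow> real) \<Rightarrow> real \<Rightarrow> ((nat \<Rightarrow> real) \<Rightarrow> real) \<Rightarrow> ennreal" where
  "prior_nn_integral p pip lam f =
     (\<Sum>s\<le>p. ennreal (pip s / real (p choose s)) *
        (\<Sum>S\<in>{S. S \<subseteq> {..<p} \<and> card S = s}.
            \<integral>\<^sup>+ b. ennreal (f (extend_zero S b)) \<partial>(slab S lam)))"

end

theory Submission
  imports Defs
begin

abbreviation Lap :: "real \<Rightarrow> real measure" where
  "Lap lam \<equiv> density lborel (\<lambda>x. ennreal (laplace_density lam x))"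

lemma lap_meas[measurable]: "(\<lambda>x. laplace_density lam x) \<in> borel_measurable borel"
  unfolding laplace_density_def by measurable

lemma lap_sf: "sigma_finite_measure (Lap lam)"
  by (subst sigma_finite_measure.sigma_finite_iff_density_finite[OF sigma_finite_lborel]) auto

lemma lap_psf: "product_sigma_finite (\<lambda>_. Lap lam)"
  unfolding product_sigma_finite_def using lap_sf by auto

definition TT :: "nat set \<Rightarrow> real \<Rightarrow> (nat\<Rightarrow>real) \<Rightarrow> (nat\<Rightarrow>real) \<Rightarrow> nat \<Rightarrow> real" where
  "TT S sg c b = restrict (\<lambda>i. sg * b i + c i) S"

lemma TT_meas[measurable]: "TT S sg c \<in> measurable (PiM S (\<lambda>_. Lap lam)) (PiM S (\<lambda>_. Lap lam))"
  unfolding TT_def by measurable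

lemma TT_insert: "i \<notin> S \<Longrightarrow> TT (insert i S) sg c (y(i:=x)) = (TT S sg c y)(i := c i + sg * x)"
  unfolding TT_def by (auto simp: fun_eq_iff)

lemma lap_shift:
  assumes "lam > 0" "sg = 1 \<or> sg = -1"
  shows "ennreal (exp (- lam * \<bar>a\<bar>)) * ennreal (laplace_density lam x)
         \<le> ennreal (laplace_density lam (a + sg * x))"
proof -
  have "\<bar>a + sg * x\<bar> \<le> \<bar>a\<bar> + \<bar>x\<bar>" using assms(2) by auto
  then have "lam * \<bar>a + sg * x\<bar> \<le> lam * (\<bar>a\<bar> + \<bar>x\<bar>)"
    using assms(1) by (intro mult_left_mono) auto
  then have "exp (- lam * \<bar>a + sg * x\<bar>) \<ge> exp (- lam * \<bar>a\<bar>) * exp (- lam * \<bar>x\<bar>)"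
    by (simp add: exp_add[symmetric] algebra_simps)
  then have "exp (- lam * \<bar>a\<bar>) * laplace_density lam x \<le> laplace_density lam (a + sg * x)"
    using assms(1) unfolding laplace_density_def
    by (metis (no_types, opaque_lifting) divide_pos_pos mult.left_commute mult_left_mono less_eq_real_def zero_less_numeral)
  then have "ennreal (exp (- lam * \<bar>a\<bar>) * laplace_density lam x) \<le> ennreal (laplace_density lam (a + sg * x))"
    by (rule ennreal_leI)
  moreover have "ennreal (exp (- lam * \<bar>a\<bar>) * laplace_density lam x) = ennreal (exp (- lam * \<bar>a\<bar>)) * ennreal (laplace_density lam x)"
    using assms(1) by (intro ennreal_mult) (auto simp: laplace_density_def)
  ultimately show ?thesis by simp
qed

lemma L1:
  assumes lam: "lam > 0" and sg: "sg = 1 \<or> sg = -1" and fin: "finite S"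
  shows "f \<in> borel_measurable (PiM S (\<lambda>_. Lap lam)) \<Longrightarrow>
    ennreal (exp (- lam * (\<Sum>i\<in>S. \<bar>c i\<bar>))) * (\<integral>\<^sup>+b. f (TT S sg c b) \<partial>PiM S (\<lambda>_. Lap lam))
      \<le> (\<integral>\<^sup>+b. f b \<partial>PiM S (\<lambda>_. Lap lam))"
  using fin
proof (induction S arbitrary: f rule: finite_induct)
  case empty
  then show ?case by (simp add: PiM_empty TT_def nn_integral_count_space_finite)
next
  case (insert i S f)
  interpret product_sigma_finite "\<lambda>_. Lap lam" by (rule lap_psf)
  let ?M = "\<lambda>_. Lap lam"
  let ?PS = "PiM S ?M"
  let ?PI = "PiM (insert i S) ?M"
  have fm[measurable]: "f \<in> borel_measurable ?PI" by fact
  define eS where "eS = ennreal (exp (- lam * (\<Sum>i\<in>S. \<bar>c i\<bar>)))"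
  define ei where "ei = ennreal (exp (- lam * \<bar>c i\<bar>))"
  define H where "H = (\<lambda>x. \<integral>\<^sup>+y. f ((TT S sg c y)(i := x)) \<partial>?PS)"
  interpret PS: sigma_finite_measure ?PS using sigma_finite[OF insert(1)] .
  have Hm[measurable]: "H \<in> borel_measurable borel"
    unfolding H_def
    by (rule PS.borel_measurable_nn_integral) measurable
  have "(\<integral>\<^sup>+b. f b \<partial>?PI) = (\<integral>\<^sup>+x. (\<integral>\<^sup>+y. f (y(i:=x)) \<partial>?PS) \<partial>Lap lam)"
    using insert by (subst product_nn_integral_insert_rev) auto
  also have "\<dots> \<ge> (\<integral>\<^sup>+x. eS * H x \<partial>Lap lam)"
  proof (rule nn_integral_mono)
    fix x assume "x \<in> space (Lap lam)"
    have "(\<lambda>y. f (y(i:=x))) \<in> borel_measurable ?PS" by measurable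
    from insert.IH[OF this] show "eS * H x \<le> (\<integral>\<^sup>+y. f (y(i:=x)) \<partial>?PS)"
      unfolding eS_def H_def .
  qed
  finally have 1: "eS * (\<integral>\<^sup>+x. H x \<partial>Lap lam) \<le> (\<integral>\<^sup>+b. f b \<partial>?PI)"
    by (subst (asm) nn_integral_cmult) auto
  have "(\<integral>\<^sup>+x. H x \<partial>Lap lam) = (\<integral>\<^sup>+x. ennreal (laplace_density lam x) * H x \<partial>lborel)"
    by (subst nn_integral_density) auto
  also have "\<dots> = (\<integral>\<^sup>+x. ennreal (laplace_density lam (c i + sg * x)) * H (c i + sg * x) \<partial>lborel)"
    using sg by (subst nn_integral_real_affine[where c=sg and t="c i"]) auto
  also have "\<dots> \<ge> (\<integral>\<^sup>+x. ei * (ennreal (laplace_density lam x) * H (c i + sg * x)) \<partial>lborel)"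
  proof (rule nn_integral_mono)
    fix x
    have "ei * ennreal (laplace_density lam x) \<le> ennreal (laplace_density lam (c i + sg * x))"
      unfolding ei_def by (rule lap_shift[OF lam sg])
    then show "ei * (ennreal (laplace_density lam x) * H (c i + sg * x))
        \<le> ennreal (laplace_density lam (c i + sg * x)) * H (c i + sg * x)"
      by (metis mult.assoc mult_right_mono zero_le)
  qed
  finally have 2: "ei * (\<integral>\<^sup>+x. H (c i + sg * x) \<partial>Lap lam) \<le> (\<integral>\<^sup>+x. H x \<partial>Lap lam)"
    by (subst (asm) nn_integral_cmult) (auto simp: nn_integral_density)
  have "(\<integral>\<^sup>+b. f (TT (insert i S) sg c b) \<partial>?PI)
      = (\<integral>\<^sup>+x. (\<integral>\<^sup>+y. f (TT (insert i S) sg c (y(i:=x))) \<partial>?PS) \<partial>Lap lam)"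
    using insert by (subst product_nn_integral_insert_rev) auto
  also have "\<dots> = (\<integral>\<^sup>+x. H (c i + sg * x) \<partial>Lap lam)"
    unfolding H_def using insert by (simp add: TT_insert)
  finally have 3: "(\<integral>\<^sup>+b. f (TT (insert i S) sg c b) \<partial>?PI) = (\<integral>\<^sup>+x. H (c i + sg * x) \<partial>Lap lam)" .
  have e: "ennreal (exp (- lam * (\<Sum>i\<in>insert i S. \<bar>c i\<bar>))) = eS * ei"
    unfolding eS_def ei_def using insert
    by (simp add: ennreal_mult[symmetric] exp_add[symmetric] algebra_simps)
  have "eS * ei * (\<integral>\<^sup>+x. H (c i + sg * x) \<partial>Lap lam) \<le> eS * (\<integral>\<^sup>+x. H x \<partial>Lap lam)"
    using 2 by (simp add: mult.assoc mult_left_mono)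
  with 1 show ?case unfolding e 3 by (meson order_trans)
qed

lemma Jint:
  fixes t :: real assumes t: "t \<ge> 0"
  shows "ennreal (2 * (t ^ Suc k / Suc k)) \<le> (\<integral>\<^sup>+x. ennreal (indicator {-t..t} x * (t - \<bar>x\<bar>) ^ k) \<partial>lborel)"
proof -
  have der: "((\<lambda>x. - ((t - x) ^ Suc k / Suc k)) has_real_derivative (t - x) ^ k) (at x)" for x
    by (rule derivative_eq_intros refl | simp)+
  have I: "(\<integral>\<^sup>+x. ennreal ((t - x) ^ k) * indicator {0..t} x \<partial>lborel) = ennreal (t ^ Suc k / Suc k)"
    using t by (subst nn_integral_FTC_Icc[OF _ der]) (auto simp: zero_power)
  have I2: "(\<integral>\<^sup>+x. ennreal ((t + x) ^ k) * indicator {0..t} (-x) \<partial>lborel) = ennreal (t ^ Suc k / Suc k)"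
    by (subst nn_integral_real_affine[where c="-1" and t=0]) (auto simp: I)
  have "(\<integral>\<^sup>+x. ennreal ((t - x) ^ k) * indicator {0..t} x + ennreal ((t + x) ^ k) * indicator {0..t} (-x) \<partial>lborel)
     \<le> (\<integral>\<^sup>+x. ennreal (indicator {-t..t} x * (t - \<bar>x\<bar>) ^ k) \<partial>lborel)"
  proof (rule nn_integral_mono_AE)
    show "AE x in lborel. ennreal ((t - x) ^ k) * indicator {0..t} x + ennreal ((t + x) ^ k) * indicator {0..t} (-x)
       \<le> ennreal (indicator {-t..t} x * (t - \<bar>x\<bar>) ^ k)"
      using AE_lborel_singleton[of 0]
    proof eventually_elim
      case (elim x)
      show ?case
      proof (cases "x > 0")
        case True then show ?thesis by (auto split: split_indicator)
      next
        case False then have "x < 0" using elim by auto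
        then show ?thesis by (auto split: split_indicator)
      qed
    qed
  qed
  also note nn_integral_add
  moreover have "ennreal (2 * (t ^ Suc k / Suc k)) = ennreal (t ^ Suc k / Suc k) + ennreal (t ^ Suc k / Suc k)"
    using t by (simp add: ennreal_plus[symmetric])
  ultimately show ?thesis using I I2
    by (subst (asm) nn_integral_add) auto
qed

lemma L2:
  assumes lam: "lam > 0" and fin: "finite S"
  shows "t \<ge> 0 \<Longrightarrow> ennreal (exp (- lam * t) * (lam * t) ^ card S / fact (card S))
     \<le> (\<integral>\<^sup>+b. indicator {b. (\<Sum>j\<in>S. \<bar>b j\<bar>) \<le> t} b \<partial>PiM S (\<lambda>_. Lap lam))"
  using fin
proof (induction S arbitrary: t rule: finite_induct)
  case (empty t)
  then show ?case using lam by (simp add: PiM_empty nn_integral_count_space_finite)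
next
  case (insert i S t)
  interpret product_sigma_finite "\<lambda>_. Lap lam" by (rule lap_psf)
  let ?M = "\<lambda>_. Lap lam"
  let ?PS = "PiM S ?M"
  let ?PI = "PiM (insert i S) ?M"
  define k where "k = card S"
  have ck: "card (insert i S) = Suc k" using insert by (simp add: k_def)
  define C where "C = lam ^ Suc k * exp (- lam * t) / (2 * fact k)"
  have C0: "C \<ge> 0" using lam by (simp add: C_def)
  have eq: "(\<Sum>j\<in>insert i S. \<bar>(y(i:=x)) j\<bar>) = \<bar>x\<bar> + (\<Sum>j\<in>S. \<bar>y j\<bar>)" for x y
  proof -
    have "(\<Sum>j\<in>S. \<bar>(y(i:=x)) j\<bar>) = (\<Sum>j\<in>S. \<bar>y j\<bar>)"
      using insert(2) by (intro sum.cong) auto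
    then show ?thesis using insert(1,2) by simp
  qed
  have "(\<integral>\<^sup>+b. indicator {b. (\<Sum>j\<in>insert i S. \<bar>b j\<bar>) \<le> t} b \<partial>?PI)
     = (\<integral>\<^sup>+x. (\<integral>\<^sup>+y. indicator {b. (\<Sum>j\<in>insert i S. \<bar>b j\<bar>) \<le> t} (y(i:=x)) \<partial>?PS) \<partial>Lap lam)"
    using insert by (subst product_nn_integral_insert_rev) auto
  also have "\<dots> = (\<integral>\<^sup>+x. (\<integral>\<^sup>+y. indicator {b. (\<Sum>j\<in>S. \<bar>b j\<bar>) \<le> t - \<bar>x\<bar>} y \<partial>?PS) \<partial>Lap lam)"
    by (intro nn_integral_cong) (simp only: indicator_def mem_Collect_eq eq, auto)
  finally have A1: "(\<integral>\<^sup>+b. indicator {b. (\<Sum>j\<in>insert i S. \<bar>b j\<bar>) \<le> t} b \<partial>?PI) = (\<integral>\<^sup>+x. (\<integral>\<^sup>+y. indicator {b. (\<Sum>j\<in>S. \<bar>b j\<bar>) \<le> t - \<bar>x\<bar>} y \<partial>?PS) \<partial>Lap lam)" .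
  have A2: "(\<integral>\<^sup>+x. (\<integral>\<^sup>+y. indicator {b. (\<Sum>j\<in>S. \<bar>b j\<bar>) \<le> t - \<bar>x\<bar>} y \<partial>?PS) \<partial>Lap lam) \<ge> (\<integral>\<^sup>+x. ennreal (indicator {-t..t} x * (exp (- lam * (t - \<bar>x\<bar>)) * (lam * (t - \<bar>x\<bar>)) ^ k / fact k)) \<partial>Lap lam)"
  proof (rule nn_integral_mono)
    fix x :: real
    show "ennreal (indicator {-t..t} x * (exp (- lam * (t - \<bar>x\<bar>)) * (lam * (t - \<bar>x\<bar>)) ^ k / fact k))
       \<le> (\<integral>\<^sup>+y. indicator {b. (\<Sum>j\<in>S. \<bar>b j\<bar>) \<le> t - \<bar>x\<bar>} y \<partial>?PS)"
    proof (cases "\<bar>x\<bar> \<le> t")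
      case True
      then show ?thesis using insert.IH[of "t - \<bar>x\<bar>"] by (auto simp: k_def indicator_def)
    next
      case False
      then show ?thesis by (auto simp: indicator_def)
    qed
  qed
  have "(\<integral>\<^sup>+x. ennreal (indicator {-t..t} x * (exp (- lam * (t - \<bar>x\<bar>)) * (lam * (t - \<bar>x\<bar>)) ^ k / fact k)) \<partial>Lap lam)
      = (\<integral>\<^sup>+x. ennreal C * ennreal (indicator {-t..t} x * (t - \<bar>x\<bar>) ^ k) \<partial>lborel)"
  proof (subst nn_integral_density, simp, simp, intro nn_integral_cong)
    fix x :: real
    have "laplace_density lam x * (indicator {-t..t} x * (exp (- lam * (t - \<bar>x\<bar>)) * (lam * (t - \<bar>x\<bar>)) ^ k / fact k))
        = C * (indicator {-t..t} x * (t - \<bar>x\<bar>) ^ k)"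
    proof -
      have h1: "exp (- lam * \<bar>x\<bar>) * exp (- lam * (t - \<bar>x\<bar>)) = exp (- lam * t)"
        by (simp add: exp_add[symmetric] algebra_simps)
      have h2: "(lam * (t - \<bar>x\<bar>)) ^ k = lam ^ k * (t - \<bar>x\<bar>) ^ k"
        by (rule power_mult_distrib)
      show ?thesis
        unfolding C_def laplace_density_def h1[symmetric] h2
        by (simp add: indicator_def field_simps)
    qed
    moreover have "indicator {-t..t} x * (exp (- lam * (t - \<bar>x\<bar>)) * (lam * (t - \<bar>x\<bar>)) ^ k / fact k) \<ge> 0"
      using lam by (auto simp: indicator_def)
    moreover have "indicator {-t..t} x * (t - \<bar>x\<bar>) ^ k \<ge> 0"
      by (auto simp: indicator_def)
    moreover have "laplace_density lam x \<ge> 0" using lam by (simp add: laplace_density_def)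
    ultimately show "ennreal (laplace_density lam x) * ennreal (indicator {-t..t} x * (exp (- lam * (t - \<bar>x\<bar>)) * (lam * (t - \<bar>x\<bar>)) ^ k / fact k))
      = ennreal C * ennreal (indicator {-t..t} x * (t - \<bar>x\<bar>) ^ k)"
      using C0 by (metis ennreal_mult)
  qed
  also have "\<dots> = ennreal C * (\<integral>\<^sup>+x. ennreal (indicator {-t..t} x * (t - \<bar>x\<bar>) ^ k) \<partial>lborel)"
    by (subst nn_integral_cmult) auto
  finally have A3: "(\<integral>\<^sup>+x. ennreal (indicator {-t..t} x * (exp (- lam * (t - \<bar>x\<bar>)) * (lam * (t - \<bar>x\<bar>)) ^ k / fact k)) \<partial>Lap lam) = ennreal C * (\<integral>\<^sup>+x. ennreal (indicator {-t..t} x * (t - \<bar>x\<bar>) ^ k) \<partial>lborel)" .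
  have A4: "ennreal C * (\<integral>\<^sup>+x. ennreal (indicator {-t..t} x * (t - \<bar>x\<bar>) ^ k) \<partial>lborel) \<ge> ennreal C * ennreal (2 * (t ^ Suc k / Suc k))"
    using Jint[OF insert.prems] by (rule mult_left_mono) simp
  have A5: "ennreal C * ennreal (2 * (t ^ Suc k / Suc k)) = ennreal (exp (- lam * t) * (lam * t) ^ card (insert i S) / fact (card (insert i S)))"
  proof -
    have fk: "(fact k :: real) > 0" by simp
    have "C * (2 * (t ^ Suc k / Suc k)) = exp (- lam * t) * (lam * t) ^ Suc k / fact (Suc k)"
    proof -
      have f1: "(fact (Suc k) :: real) = real (Suc k) * fact k" by (rule fact_Suc)
      have f2: "real (Suc k) > 0" by simp
      show ?thesis unfolding C_def f1 power_mult_distrib using fk f2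
        by (simp add: divide_simps del: of_nat_Suc)
    qed
    then show ?thesis unfolding ck using C0 insert.prems
      by (subst ennreal_mult[symmetric]) auto
  qed
  have "ennreal (exp (- lam * t) * (lam * t) ^ card (insert i S) / fact (card (insert i S)))
      = ennreal C * ennreal (2 * (t ^ Suc k / Suc k))" using A5 by simp
  also have "\<dots> \<le> ennreal C * (\<integral>\<^sup>+x. ennreal (indicator {-t..t} x * (t - \<bar>x\<bar>) ^ k) \<partial>lborel)"
    by (rule A4)
  also have "\<dots> = (\<integral>\<^sup>+x. ennreal (indicator {-t..t} x * (exp (- lam * (t - \<bar>x\<bar>)) * (lam * (t - \<bar>x\<bar>)) ^ k / fact k)) \<partial>Lap lam)"
    by (rule A3[symmetric])
  also have "\<dots> \<le> (\<integral>\<^sup>+x. (\<integral>\<^sup>+y. indicator {b. (\<Sum>j\<in>S. \<bar>b j\<bar>) \<le> t - \<bar>x\<bar>} y \<partial>?PS) \<partial>Lap lam)"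
    by (rule A2)
  also have "\<dots> = (\<integral>\<^sup>+b. indicator {b. (\<Sum>j\<in>insert i S. \<bar>b j\<bar>) \<le> t} b \<partial>?PI)"
    by (rule A1[symmetric])
  finally show ?case .
qed

lemma l2sum:
  fixes a :: "nat \<Rightarrow> nat \<Rightarrow> real"
  assumes "finite S"
  shows "sqrt (\<Sum>k<n. (\<Sum>i\<in>S. a i k)\<^sup>2) \<le> (\<Sum>i\<in>S. sqrt (\<Sum>k<n. (a i k)\<^sup>2))"
  using assms
proof (induction S rule: finite_induct)
  case empty
  then show ?case by simp
next
  case (insert i S)
  have "sqrt (\<Sum>k<n. (\<Sum>j\<in>insert i S. a j k)\<^sup>2) = L2_set (\<lambda>k. a i k + (\<Sum>j\<in>S. a j k)) {..<n}"
    using insert by (simp add: L2_set_def)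
  also have "\<dots> \<le> L2_set (a i) {..<n} + L2_set (\<lambda>k. (\<Sum>j\<in>S. a j k)) {..<n}"
    by (rule L2_set_triangle_ineq)
  also have "\<dots> \<le> L2_set (a i) {..<n} + (\<Sum>j\<in>S. sqrt (\<Sum>k<n. (a j k)\<^sup>2))"
    using insert.IH by (simp add: L2_set_def)
  also have "\<dots> = (\<Sum>j\<in>insert i S. sqrt (\<Sum>k<n. (a j k)\<^sup>2))"
    using insert by (simp add: L2_set_def)
  finally show ?case .
qed

lemma colnorm:
  assumes "i < p"
  shows "sqrt (\<Sum>k<n. (X k i)\<^sup>2) \<le> col_norm_max n p X"
  unfolding col_norm_max_def using assms by (intro Max_ge) auto

lemma vbound:
  assumes fin: "finite S" and Sp: "S \<subseteq> {..<p}"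
  shows "(\<Sum>k<n. (\<Sum>i\<in>S. X k i * b i)\<^sup>2) \<le> (col_norm_max n p X * (\<Sum>i\<in>S. \<bar>b i\<bar>))\<^sup>2"
proof -
  have "sqrt (\<Sum>k<n. (\<Sum>i\<in>S. X k i * b i)\<^sup>2) \<le> (\<Sum>i\<in>S. sqrt (\<Sum>k<n. (X k i * b i)\<^sup>2))"
    by (rule l2sum[OF fin])
  also have "\<dots> = (\<Sum>i\<in>S. \<bar>b i\<bar> * sqrt (\<Sum>k<n. (X k i)\<^sup>2))"
  proof (rule sum.cong[OF refl])
    fix i
    have "(\<Sum>k<n. (X k i * b i)\<^sup>2) = (b i)\<^sup>2 * (\<Sum>k<n. (X k i)\<^sup>2)"
      by (simp add: power_mult_distrib sum_distrib_left mult.commute)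
    then show "sqrt (\<Sum>k<n. (X k i * b i)\<^sup>2) = \<bar>b i\<bar> * sqrt (\<Sum>k<n. (X k i)\<^sup>2)"
      by (simp add: real_sqrt_mult)
  qed
  also have "\<dots> \<le> (\<Sum>i\<in>S. \<bar>b i\<bar> * col_norm_max n p X)"
    using Sp by (intro sum_mono mult_left_mono colnorm) auto
  also have "\<dots> = col_norm_max n p X * (\<Sum>i\<in>S. \<bar>b i\<bar>)"
    by (simp add: sum_distrib_left mult.commute)
  finally have h: "sqrt (\<Sum>k<n. (\<Sum>i\<in>S. X k i * b i)\<^sup>2) \<le> col_norm_max n p X * (\<Sum>i\<in>S. \<bar>b i\<bar>)" .
  have "(\<Sum>k<n. (\<Sum>i\<in>S. X k i * b i)\<^sup>2) = (sqrt (\<Sum>k<n. (\<Sum>i\<in>S. X k i * b i)\<^sup>2))\<^sup>2"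
    by (simp add: sum_nonneg)
  also have "\<dots> \<le> (col_norm_max n p X * (\<Sum>i\<in>S. \<bar>b i\<bar>))\<^sup>2"
    using h by (intro power_mono) (auto intro: sum_nonneg)
  finally show ?thesis .
qed

lemma fact_choose_le:
  assumes "s \<le> p"
  shows "fact s * real (p choose s) \<le> real p ^ s"
proof -
  have "fact p = fact s * (p choose s) * fact (p - s)"
    using binomial_fact_lemma[OF assms] by (simp add: algebra_simps)
  then have "fact p div fact (p - s) = (fact s * (p choose s) :: nat)"
    by simp
  with fact_div_fact_le_pow[OF assms] have "fact s * (p choose s) \<le> p ^ s" by simp
  then have "real (fact s * (p choose s)) \<le> real (p ^ s)" by (rule of_nat_mono)
  then show ?thesis by simp
qed

theorem lemma2:
  shows "\<exists>P0::nat. \<forall>p\<ge>P0. \<forall>(n::nat) (X::nat \<Rightarrow> nat \<Rightarrow> real) (lam::real) (pip::nat \<Rightarrow> real)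
            (betas::nat \<Rightarrow> real) (Y::nat \<Rightarrow> real).
     0 < lam \<and> col_norm_max n p X / real p \<le> lam
     \<and> lam \<le> 4 * col_norm_max n p X * sqrt (ln (real p))
     \<and> (\<forall>s. 0 \<le> pip s) \<and> (\<Sum>s\<le>p. pip s) = 1
     \<longrightarrow> prior_nn_integral p pip lam (\<lambda>beta. Lambda n p X beta betas Y)
         \<ge> ennreal (pip (card {i. i < p \<and> betas i \<noteq> 0}) / real p ^ (2 * card {i. i < p \<and> betas i \<noteq> 0})
                    * exp (- lam * (\<Sum>i<p. \<bar>betas i\<bar>)) * exp (-1))"
proof (intro exI[of _ 2] allI impI)
  fix p n :: nat and X :: "nat \<Rightarrow> nat \<Rightarrow> real" and lam :: real and pip :: "nat \<Rightarrow> real"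
    and betas Y :: "nat \<Rightarrow> real"
  assume p2: "2 \<le> p"
  assume H: "0 < lam \<and> col_norm_max n p X / real p \<le> lam
     \<and> lam \<le> 4 * col_norm_max n p X * sqrt (ln (real p))
     \<and> (\<forall>s. 0 \<le> pip s) \<and> (\<Sum>s\<le>p. pip s) = 1"
  then have lam: "0 < lam" and lamlow: "col_norm_max n p X / real p \<le> lam"
    and pip0: "\<And>s. 0 \<le> pip s" by auto
  have pp: "real p > 0" using p2 by simp
  define S where "S = {i. i < p \<and> betas i \<noteq> 0}"
  define s where "s = card S"
  have Sp: "S \<subseteq> {..<p}" by (auto simp: S_def)
  have finS: "finite S" using Sp finite_subset by blast
  have sp: "s \<le> p" unfolding s_def using card_mono[OF _ Sp] by simp
  define N where "N = col_norm_max n p X"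
  have N0: "N \<ge> 0"
  proof -
    have "0 \<le> sqrt (\<Sum>k<n. (X k 0)\<^sup>2)" by (simp add: sum_nonneg)
    also have "\<dots> \<le> N" unfolding N_def using p2 by (intro colnorm) simp
    finally show ?thesis .
  qed
  define M where "M = PiM S (\<lambda>_. Lap lam)"
  have slabM: "slab S lam = M" by (simp add: slab_def M_def)
  define eps where "eps k = Y k - matvec p X betas k" for k
  define v where "v b k = (\<Sum>i\<in>S. X k i * b i)" for b :: "nat \<Rightarrow> real" and k
  define G where "G b = exp (-(1/2) * (\<Sum>k<n. (v b k)\<^sup>2) + (\<Sum>k<n. eps k * v b k))" for b
  define G' where "G' b = exp (-(1/2) * (\<Sum>k<n. (v b k)\<^sup>2) - (\<Sum>k<n. eps k * v b k))" for b
  have mv: "matvec p X (\<lambda>i. extend_zero S b i - betas i) k = (\<Sum>i\<in>S. X k i * (b i - betas i))" for b k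
  proof -
    have "(\<Sum>i<p. X k i * (extend_zero S b i - betas i)) = (\<Sum>i\<in>S. X k i * (extend_zero S b i - betas i))"
      by (rule sum.mono_neutral_right) (auto simp: S_def extend_zero_def)
    also have "\<dots> = (\<Sum>i\<in>S. X k i * (b i - betas i))"
      by (rule sum.cong) (auto simp: extend_zero_def)
    finally show ?thesis by (simp add: matvec_def)
  qed
  define F where "F b = exp (-(1/2) * (\<Sum>k<n. (\<Sum>i\<in>S. X k i * (b i - betas i))\<^sup>2)
      + (\<Sum>k<n. eps k * (\<Sum>i\<in>S. X k i * (b i - betas i))))" for b
  have FL: "Lambda n p X (extend_zero S b) betas Y = F b" for b
    by (simp add: Lambda_def mv eps_def F_def)
  have Fm: "(\<lambda>b. ennreal (F b)) \<in> borel_measurable M" unfolding F_def M_def by measurable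
  have Gm: "(\<lambda>b. ennreal (G b)) \<in> borel_measurable M" unfolding G_def v_def M_def by measurable
  have G'm: "(\<lambda>b. ennreal (G' b)) \<in> borel_measurable M" unfolding G'_def v_def M_def by measurable
  have FT: "F (TT S 1 betas b) = G b" for b
  proof -
    have "(\<Sum>i\<in>S. X k i * (TT S 1 betas b i - betas i)) = v b k" for k
      unfolding v_def by (rule sum.cong) (auto simp: TT_def)
    then show ?thesis by (simp add: F_def G_def)
  qed
  have GT: "G (TT S (-1) (\<lambda>_. 0) b) = G' b" for b
  proof -
    have "v (TT S (-1) (\<lambda>_. 0) b) k = - v b k" for k
      unfolding v_def by (subst sum_negf[symmetric], rule sum.cong) (auto simp: TT_def)
    then show ?thesis by (simp add: G_def G'_def sum_negf)
  qed
  define E where "E = exp (- lam * (\<Sum>i\<in>S. \<bar>betas i\<bar>))"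
  have stepA: "ennreal E * (\<integral>\<^sup>+b. ennreal (G b) \<partial>M) \<le> (\<integral>\<^sup>+b. ennreal (F b) \<partial>M)"
    using L1[OF lam _ finS, of 1 "\<lambda>b. ennreal (F b)" betas] Fm
    unfolding E_def M_def FT by simp
  have stepB: "(\<integral>\<^sup>+b. ennreal (G' b) \<partial>M) \<le> (\<integral>\<^sup>+b. ennreal (G b) \<partial>M)"
    using L1[OF lam _ finS, of "-1" "\<lambda>b. ennreal (G b)" "\<lambda>_. 0"] Gm
    unfolding M_def GT by simp
  define r where "r = 1 / (lam * real p)"
  have r0: "r \<ge> 0" using lam pp by (simp add: r_def)
  have Nr: "N * r \<le> 1"
    using lamlow lam pp unfolding r_def N_def by (simp add: field_simps)
  have ptw: "ennreal (2 * exp (-(1/2))) * indicator {b. (\<Sum>j\<in>S. \<bar>b j\<bar>) \<le> r} b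
      \<le> ennreal (G b) + ennreal (G' b)" for b
  proof (cases "(\<Sum>j\<in>S. \<bar>b j\<bar>) \<le> r")
    case True
    have "(\<Sum>k<n. (v b k)\<^sup>2) \<le> (N * (\<Sum>i\<in>S. \<bar>b i\<bar>))\<^sup>2"
      unfolding v_def N_def by (rule vbound[OF finS Sp])
    also have "\<dots> \<le> (N * r)\<^sup>2"
      using True N0 by (intro power_mono mult_left_mono) (auto intro: sum_nonneg)
    also have "\<dots> \<le> 1" using Nr N0 r0 by (simp add: power_le_one)
    finally have q: "(\<Sum>k<n. (v b k)\<^sup>2) \<le> 1" .
    define a where "a = (\<Sum>k<n. eps k * v b k)"
    define qq where "qq = (\<Sum>k<n. (v b k)\<^sup>2)"
    have ea: "exp a + exp (-a) \<ge> 2"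
      using exp_ge_add_one_self[of a] exp_ge_add_one_self[of "-a"] by linarith
    have "G b + G' b = exp (-(1/2) * qq) * (exp a + exp (-a))"
    proof -
      have g1: "G b = exp (-(1/2)*qq) * exp a" unfolding G_def a_def qq_def by (rule exp_add)
      have g2: "G' b = exp (-(1/2)*qq) * exp (-a)" unfolding G'_def a_def qq_def
        using exp_add[of "-(1/2)*(\<Sum>k<n. (v b k)\<^sup>2)" "-(\<Sum>k<n. eps k * v b k)"] by simp
      show ?thesis unfolding g1 g2 by (simp only: distrib_left)
    qed
    moreover have "exp (-(1/2) * qq) * (exp a + exp (-a)) \<ge> exp (-(1/2) * qq) * 2"
      using ea by (intro mult_left_mono) auto
    moreover have "exp (-(1/2)) \<le> exp (-(1/2) * qq)" using q unfolding qq_def by simp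
    ultimately have "G b + G' b \<ge> 2 * exp (-(1/2))"
      by linarith
    then have "ennreal (2 * exp (-(1/2))) \<le> ennreal (G b + G' b)" by (rule ennreal_leI)
    also have "\<dots> = ennreal (G b) + ennreal (G' b)"
      by (rule ennreal_plus) (auto simp: G_def G'_def)
    finally show ?thesis using True by simp
  next
    case False
    then show ?thesis by simp
  qed
  have L2r: "ennreal (exp (- lam * r) * (lam * r) ^ s / fact s)
      \<le> (\<integral>\<^sup>+b. indicator {b. (\<Sum>j\<in>S. \<bar>b j\<bar>) \<le> r} b \<partial>M)"
    unfolding s_def M_def by (rule L2[OF lam finS r0])
  define B where "B = exp (-(1/2)) * (exp (- lam * r) * (lam * r) ^ s / fact s)"
  have "ennreal 2 * ennreal B = ennreal (2 * exp (-(1/2))) * ennreal (exp (- lam * r) * (lam * r) ^ s / fact s)"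
  proof -
    have "ennreal 2 * ennreal B = ennreal (2 * B)"
      using lam r0 by (intro ennreal_mult[symmetric]) (auto simp: B_def intro!: mult_nonneg_nonneg divide_nonneg_nonneg)
    also have "2 * B = (2 * exp (-(1/2))) * (exp (- lam * r) * (lam * r) ^ s / fact s)"
      unfolding B_def by (simp only: mult.assoc)
    also have "ennreal \<dots> = ennreal (2 * exp (-(1/2))) * ennreal (exp (- lam * r) * (lam * r) ^ s / fact s)"
      using lam r0 by (intro ennreal_mult) (auto intro!: mult_nonneg_nonneg divide_nonneg_nonneg)
    finally show ?thesis .
  qed
  also have "\<dots> \<le> ennreal (2 * exp (-(1/2))) * (\<integral>\<^sup>+b. indicator {b. (\<Sum>j\<in>S. \<bar>b j\<bar>) \<le> r} b \<partial>M)"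
    using L2r by (rule mult_left_mono) simp
  also have "\<dots> = (\<integral>\<^sup>+b. ennreal (2 * exp (-(1/2))) * indicator {b. (\<Sum>j\<in>S. \<bar>b j\<bar>) \<le> r} b \<partial>M)"
    unfolding M_def by (subst nn_integral_cmult) auto
  also have "\<dots> \<le> (\<integral>\<^sup>+b. ennreal (G b) + ennreal (G' b) \<partial>M)"
    by (rule nn_integral_mono) (rule ptw)
  also have "\<dots> = (\<integral>\<^sup>+b. ennreal (G b) \<partial>M) + (\<integral>\<^sup>+b. ennreal (G' b) \<partial>M)"
    using Gm G'm by (rule nn_integral_add)
  also have "\<dots> \<le> (\<integral>\<^sup>+b. ennreal (G b) \<partial>M) + (\<integral>\<^sup>+b. ennreal (G b) \<partial>M)"
    using stepB by (rule add_left_mono)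
  also have "\<dots> = ennreal 2 * (\<integral>\<^sup>+b. ennreal (G b) \<partial>M)"
    by (simp add: mult_2)
  finally have "ennreal B \<le> (\<integral>\<^sup>+b. ennreal (G b) \<partial>M)"
    by (subst (asm) ennreal_mult_le_mult_iff) auto
  define B' where "B' = exp (-1) * ((1 / real p) ^ s / fact s)"
  have BB: "B' \<le> B"
  proof -
    have lr: "lam * r = 1 / real p" using lam pp by (simp add: r_def)
    have "exp (-1) \<le> exp (-(1/2)) * exp (- lam * r)"
    proof -
      have h: "1 / real p \<le> 1/2" using p2 by (simp add: divide_simps)
      have "-1 \<le> -(1/2) + (- lam * r)" using h lr by linarith
      then have "exp (-1) \<le> exp (-(1/2) + (- lam * r))" by simp
      then show ?thesis by (simp only: exp_add)
    qed
    moreover have c: "0 \<le> (1/real p)^s / fact s" by simp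
    ultimately have "exp (-1) * ((1/real p)^s / fact s) \<le> (exp (-(1/2)) * exp (- lam * r)) * ((1/real p)^s / fact s)"
      by (rule mult_right_mono)
    then show ?thesis unfolding B_def B'_def lr
      by (simp add: mult_ac)
  qed
  have intF: "ennreal (E * B') \<le> (\<integral>\<^sup>+b. ennreal (F b) \<partial>M)"
  proof -
    have "ennreal (E * B') = ennreal E * ennreal B'"
      by (rule ennreal_mult) (auto simp: E_def B'_def)
    also have "\<dots> \<le> ennreal E * ennreal B"
      using BB by (intro mult_left_mono ennreal_leI) auto
    also have "\<dots> \<le> ennreal E * (\<integral>\<^sup>+b. ennreal (G b) \<partial>M)"
      using \<open>ennreal B \<le> _\<close> by (rule mult_left_mono) simp
    also have "\<dots> \<le> (\<integral>\<^sup>+b. ennreal (F b) \<partial>M)" by (rule stepA)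
    finally show ?thesis .
  qed
  have sumS: "(\<Sum>i\<in>S. \<bar>betas i\<bar>) = (\<Sum>i<p. \<bar>betas i\<bar>)"
    by (rule sum.mono_neutral_left) (auto simp: S_def)
  define C where "C = real (p choose s)"
  have C0: "C > 0" using sp by (simp add: C_def)
  have Cf: "fact s * C \<le> real p ^ s" unfolding C_def by (rule fact_choose_le[OF sp])
  have realineq: "pip s / real p ^ (2 * s) * E * exp (-1) \<le> pip s / C * (E * B')"
  proof -
    have ps: "real p ^ s > 0" using pp by simp
    have "1 / (real p ^ s * real p ^ s) \<le> 1 / (C * fact s * real p ^ s)"
      using Cf C0 ps by (intro divide_left_mono mult_right_mono mult_pos_pos) (auto simp: mult.commute)
    moreover have "pip s * E * exp (-1) \<ge> 0" using pip0 by (simp add: E_def)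
    ultimately have "pip s * E * exp (-1) * (1 / (real p ^ s * real p ^ s)) \<le> pip s * E * exp (-1) * (1 / (C * fact s * real p ^ s))"
      by (rule mult_left_mono)
    then show ?thesis
      unfolding B'_def using C0 ps
      by (simp add: power_mult power2_eq_square mult_ac power_inverse divide_inverse)
  qed
  have trm: "ennreal (pip s / real p ^ (2 * s) * exp (- lam * (\<Sum>i<p. \<bar>betas i\<bar>)) * exp (-1))
      \<le> ennreal (pip s / real (p choose s)) * (\<integral>\<^sup>+b. ennreal (Lambda n p X (extend_zero S b) betas Y) \<partial>slab S lam)"
  proof -
    have "ennreal (pip s / real p ^ (2 * s) * exp (- lam * (\<Sum>i<p. \<bar>betas i\<bar>)) * exp (-1))
        \<le> ennreal (pip s / C * (E * B'))"
      using realineq unfolding E_def sumS by (rule ennreal_leI)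
    also have "\<dots> = ennreal (pip s / C) * ennreal (E * B')"
      using pip0 C0 by (intro ennreal_mult) (auto simp: E_def B'_def)
    also have "\<dots> \<le> ennreal (pip s / C) * (\<integral>\<^sup>+b. ennreal (F b) \<partial>M)"
      using intF by (rule mult_left_mono) simp
    finally show ?thesis unfolding FL slabM C_def .
  qed
  have finSS: "finite {S'. S' \<subseteq> {..<p} \<and> card S' = s}"
    by (rule finite_subset[of _ "Pow {..<p}"]) auto
  have "ennreal (pip s / real (p choose s)) * (\<integral>\<^sup>+b. ennreal (Lambda n p X (extend_zero S b) betas Y) \<partial>slab S lam)
      \<le> ennreal (pip s / real (p choose s)) * (\<Sum>S'\<in>{S'. S' \<subseteq> {..<p} \<and> card S' = s}.
            \<integral>\<^sup>+ b. ennreal (Lambda n p X (extend_zero S' b) betas Y) \<partial>(slab S' lam))"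
    by (intro mult_left_mono member_le_sum finSS) (auto simp: Sp s_def)
  also have "\<dots> \<le> prior_nn_integral p pip lam (\<lambda>beta. Lambda n p X beta betas Y)"
    unfolding prior_nn_integral_def
    by (rule member_le_sum[where i=s]) (auto simp: sp)
  finally show "prior_nn_integral p pip lam (\<lambda>beta. Lambda n p X beta betas Y)
         \<ge> ennreal (pip (card {i. i < p \<and> betas i \<noteq> 0}) / real p ^ (2 * card {i. i < p \<and> betas i \<noteq> 0})
                    * exp (- lam * (\<Sum>i<p. \<bar>betas i\<bar>)) * exp (-1))"
    using trm unfolding s_def S_def by simp
qed

end
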